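(* There is a streaming algorithm that, given $\varepsilon\in(0,\tfrac12)$ and $\alpha,\delta\in(0,1)$, obtains with probability at least $1-\delta$ a $(1\pm\varepsilon)$-approximation to $F_1$ of the final frequency vector in the $\alpha$-RFDS model, using $O\!\left(\frac{1}{1-\alpha}\cdot\frac{1}{\varepsilon^2}\log n\log\frac{1}{\delta}\right)$ bits of space.
   Context: Forget model: the universe is $[n]$; the stream (of length $m=\mathrm{poly}(n)$) consists of insertions $(i,+)$, which increment coordinate $i$, and forget requests on an index $i$, which set coordinate $i$ of the current frequency vector to $0$. $\mathbf{g}$ is the final vector after all operations; $\mathbf{f}$ is the final vector if all forget requests are removed. $F_1(\mathbf{v})=\sum_i|v_i|$. The $\alpha$-RFDS model is the promise $F_1(\mathbf{g})\ge(1-\alpha)F_1(\mathbf{f})$. *)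

theory Defs
  imports "HOL-Probability.Probability"
begin

datatype sop = Ins nat | Forget nat

fun apply_op :: "(nat \<Rightarrow> int) \<Rightarrow> sop \<Rightarrow> (nat \<Rightarrow> int)" where
  "apply_op v (Ins i) = v(i := v i + 1)"
| "apply_op v (Forget i) = v(i := 0)"

definition freq_g :: "sop list \<Rightarrow> nat \<Rightarrow> int" where
  "freq_g xs = foldl apply_op (\<lambda>_. 0) xs"

definition freq_f :: "sop list \<Rightarrow> nat \<Rightarrow> int" where
  "freq_f xs = freq_g (filter (\<lambda>a. case a of Ins _ \<Rightarrow> True | Forget _ \<Rightarrow> False) xs)"

definition F1 :: "nat \<Rightarrow> (nat \<Rightarrow> int) \<Rightarrow> real" where
  "F1 n v = (\<Sum>i<n. real_of_int \<bar>v i\<bar>)"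

definition valid_stream :: "nat \<Rightarrow> sop list \<Rightarrow> bool" where
  "valid_stream n xs \<longleftrightarrow> (\<forall>a\<in>set xs. case a of Ins i \<Rightarrow> i < n | Forget i \<Rightarrow> i < n)"

definition rfds :: "real \<Rightarrow> nat \<Rightarrow> sop list \<Rightarrow> bool" where
  "rfds \<alpha> n xs \<longleftrightarrow> F1 n (freq_g xs) \<ge> (1 - \<alpha>) * F1 n (freq_f xs)"

record stream_alg =
  init :: "nat pmf"
  step :: "nat \<Rightarrow> sop \<Rightarrow> nat pmf"
  out_fn :: "nat \<Rightarrow> real"

definition run_alg :: "stream_alg \<Rightarrow> sop list \<Rightarrow> nat pmf" where
  "run_alg A xs = foldl (\<lambda>p a. bind_pmf p (\<lambda>s. step A s a)) (init A) xs"

text \<open>The algorithm uses at most b bits of space: all states lie in {0..<2^b}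
  (states are b-bit strings), and this set is closed under transitions.\<close>
definition uses_bits :: "stream_alg \<Rightarrow> nat \<Rightarrow> bool" where
  "uses_bits A b \<longleftrightarrow> set_pmf (init A) \<subseteq> {..<2^b} \<and>
     (\<forall>s<2^b. \<forall>a. set_pmf (step A s a) \<subseteq> {..<2^b})"

definition out_dist :: "stream_alg \<Rightarrow> sop list \<Rightarrow> real pmf" where
  "out_dist A xs = map_pmf (out_fn A) (run_alg A xs)"

end

theory Submission
  imports Defs
begin

fun idx :: "sop \<Rightarrow> nat" where "idx (Ins i) = i" | "idx (Forget i) = i"
fun is_ins :: "sop \<Rightarrow> bool" where "is_ins (Ins i) = True" | "is_ins (Forget i) = False"

definition alive :: "sop list \<Rightarrow> nat \<Rightarrow> bool" where
  "alive xs p \<longleftrightarrow> p < length xs \<and> is_ins (xs!p) \<and>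
     (\<forall>q. p < q \<and> q < length xs \<longrightarrow> xs!q \<noteq> Forget (idx (xs!p)))"

lemma alive_snoc:
  "alive (xs@[a]) p \<longleftrightarrow> (p < length xs \<and> alive xs p \<and> a \<noteq> Forget (idx (xs!p))) \<or> (p = length xs \<and> is_ins a)"
  unfolding alive_def
  by (auto simp: nth_append less_Suc_eq)

lemma alive_lt: "alive xs p \<Longrightarrow> p < length xs" by (simp add: alive_def)
lemma alive_ins: "alive xs p \<Longrightarrow> is_ins (xs!p)" by (simp add: alive_def)

lemma freq_g_snoc: "freq_g (xs@[a]) = apply_op (freq_g xs) a"
  by (simp add: freq_g_def)

lemma freq_g_alive: "freq_g xs i = int (card {p. alive xs p \<and> idx (xs!p) = i})"
proof (induction xs rule: rev_induct)
  case Nil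
  then show ?case by (simp add: freq_g_def alive_def)
next
  case (snoc a xs)
  show ?case
  proof (cases a)
    case (Ins j)
    show ?thesis
    proof (cases "i = j")
      case True
      have "{p. alive (xs @ [a]) p \<and> idx ((xs @ [a]) ! p) = i} = insert (length xs) {p. alive xs p \<and> idx (xs!p) = i}"
        using Ins True by (auto simp: alive_snoc nth_append dest: alive_lt)
      moreover have "length xs \<notin> {p. alive xs p \<and> idx (xs!p) = i}" by (auto simp: alive_def)
      moreover have "finite {p. alive xs p \<and> idx (xs!p) = i}"
        by (rule finite_subset[of _ "{..<length xs}"]) (auto simp: alive_def)
      ultimately show ?thesis using snoc Ins True by (simp add: freq_g_snoc)
    next
      case False
      have "{p. alive (xs @ [a]) p \<and> idx ((xs @ [a]) ! p) = i} = {p. alive xs p \<and> idx (xs!p) = i}"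
        using Ins False by (auto simp: alive_snoc nth_append dest: alive_lt)
      then show ?thesis using snoc Ins False by (simp add: freq_g_snoc)
    qed
  next
    case (Forget j)
    show ?thesis
    proof (cases "i = j")
      case True
      have e: "{p. alive (xs @ [a]) p \<and> idx ((xs @ [a]) ! p) = i} = {}"
        using Forget True by (auto simp: alive_snoc nth_append dest: alive_lt)
      show ?thesis unfolding e freq_g_snoc using Forget True by simp
    next
      case False
      have "{p. alive (xs @ [a]) p \<and> idx ((xs @ [a]) ! p) = i} = {p. alive xs p \<and> idx (xs!p) = i}"
        using Forget False by (auto simp: alive_snoc nth_append dest: alive_lt)
      then show ?thesis using snoc Forget False by (simp add: freq_g_snoc)
    qed
  qed
qed

lemma freq_f_snoc: "freq_f (xs@[a]) = (case a of Ins j \<Rightarrow> apply_op (freq_f xs) a | Forget j \<Rightarrow> freq_f xs)"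
  by (cases a) (auto simp: freq_f_def freq_g_def)

lemma freq_f_ins: "freq_f xs i = int (card {p. p < length xs \<and> xs!p = Ins i})"
proof (induction xs rule: rev_induct)
  case Nil
  then show ?case by (simp add: freq_f_def freq_g_def)
next
  case (snoc a xs)
  show ?case
  proof (cases "a = Ins i")
    case True
    have "{p. p < length (xs@[a]) \<and> (xs@[a])!p = Ins i} = insert (length xs) {p. p < length xs \<and> xs!p = Ins i}"
      using True by (auto simp: nth_append less_Suc_eq)
    then show ?thesis using snoc True by (simp add: freq_f_snoc)
  next
    case False
    have "{p. p < length (xs@[a]) \<and> (xs@[a])!p = Ins i} = {p. p < length xs \<and> xs!p = Ins i}"
      using False by (auto simp: nth_append less_Suc_eq)
    then show ?thesis using snoc False by (cases a) (auto simp: freq_f_snoc)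
  qed
qed

lemma sum_card_group:
  fixes g :: "'a \<Rightarrow> nat"
  assumes "finite P" "\<And>p. p \<in> P \<Longrightarrow> g p < n"
  shows "(\<Sum>i<n. card {p\<in>P. g p = i}) = card P"
proof -
  have "(\<Sum>i<n. card {p\<in>P. g p = i}) = (\<Sum>i<n. \<Sum>p\<in>{p\<in>P. g p = i}. (1::nat))"
    by simp
  also have "\<dots> = (\<Sum>p\<in>P. (1::nat))"
    using assms by (intro sum.group) auto
  finally show ?thesis by simp
qed

lemma valid_idx: "valid_stream n xs \<Longrightarrow> p < length xs \<Longrightarrow> idx (xs!p) < n"
  unfolding valid_stream_def by (cases "xs!p") (auto dest!: nth_mem bspec split: sop.splits)

lemma F1_g: assumes "valid_stream n xs" shows "F1 n (freq_g xs) = card {p. alive xs p}"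
proof -
  have "F1 n (freq_g xs) = real (\<Sum>i<n. card {p\<in>{p. alive xs p}. idx (xs!p) = i})"
    unfolding F1_def freq_g_alive by simp
  also have "\<dots> = card {p. alive xs p}"
    by (subst sum_card_group)
       (auto intro: finite_subset[of _ "{..<length xs}"] simp: alive_def valid_idx[OF assms])
  finally show ?thesis .
qed

lemma F1_f: assumes "valid_stream n xs" shows "F1 n (freq_f xs) = card {p. p < length xs \<and> is_ins (xs!p)}"
proof -
  have e: "\<And>i. {p. p < length xs \<and> xs!p = Ins i} = {p\<in>{p. p < length xs \<and> is_ins (xs!p)}. idx (xs!p) = i}"
    by auto (metis idx.simps is_ins.elims(2))+
  have "F1 n (freq_f xs) = real (\<Sum>i<n. card {p\<in>{p. p < length xs \<and> is_ins (xs!p)}. idx (xs!p) = i})"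
    unfolding F1_def freq_f_ins e by simp
  also have "\<dots> = card {p. p < length xs \<and> is_ins (xs!p)}"
    by (subst sum_card_group) (auto simp: valid_idx[OF assms])
  finally show ?thesis .
qed


type_synonym st = "(nat \<times> (nat \<times> nat) multiset) option"

function raise :: "nat \<Rightarrow> nat \<Rightarrow> nat \<Rightarrow> (nat \<times> nat) multiset \<Rightarrow> st" where
  "raise cap L j S = (if size S \<le> cap then Some (j, S) else if j < L then
      raise cap L (Suc j) (filter_mset (\<lambda>z. snd z < 2^(L - Suc j)) S) else None)"
  by auto
termination by (relation "Wellfounded.measure (\<lambda>(cap,L,j,S). L - j)") auto

declare raise.simps[simp del]

definition tr :: "nat \<Rightarrow> nat \<Rightarrow> nat \<Rightarrow> st \<Rightarrow> sop \<Rightarrow> nat \<Rightarrow> st" where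
  "tr cap L n s a u = (case s of None \<Rightarrow> None | Some (j, S) \<Rightarrow>
     (case a of Ins i \<Rightarrow> if i < n then raise cap L j (if u < 2^(L-j) then add_mset (i,u) S else S) else Some (j, S)
      | Forget i \<Rightarrow> Some (j, filter_mset (\<lambda>z. fst z \<noteq> i) S)))"

definition det :: "nat \<Rightarrow> nat \<Rightarrow> nat \<Rightarrow> (sop \<times> nat) list \<Rightarrow> st" where
  "det cap L n zs = foldl (\<lambda>s (a,u). tr cap L n s a u) (Some (0, {#})) zs"

definition sampz :: "nat \<Rightarrow> (sop \<times> nat) list \<Rightarrow> nat \<Rightarrow> (nat \<times> nat) multiset" where
  "sampz L zs j = mset (map (\<lambda>p. (idx (fst (zs!p)), snd (zs!p)))
      (filter (\<lambda>p. alive (map fst zs) p \<and> snd (zs!p) < 2^(L-j)) [0..<length zs]))"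

definition NZ :: "nat \<Rightarrow> (sop \<times> nat) list \<Rightarrow> nat \<Rightarrow> nat" where
  "NZ L zs j = card {p. p < length zs \<and> is_ins (fst (zs!p)) \<and> snd (zs!p) < 2^(L-j)}"

lemma sampz_size: "size (sampz L zs j) = card {p. alive (map fst zs) p \<and> snd (zs!p) < 2^(L-j)}"
proof -
  have "{p. alive (map fst zs) p \<and> snd (zs!p) < 2^(L-j)} = set (filter (\<lambda>p. alive (map fst zs) p \<and> snd (zs!p) < 2^(L-j)) [0..<length zs])"
    by (auto dest: alive_lt)
  then show ?thesis unfolding sampz_def by (simp add: distinct_card)
qed

lemma alive_map_fst: "alive (map fst zs) p \<Longrightarrow> p < length zs \<and> is_ins (fst (zs!p))"
  using alive_lt alive_ins by fastforce

lemma sampz_le_NZ: "size (sampz L zs j) \<le> NZ L zs j"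
  unfolding sampz_size NZ_def
  by (rule card_mono) (auto dest: alive_map_fst)

lemma NZ_mono: "NZ L zs j \<le> NZ L (zs@[z]) j"
  unfolding NZ_def by (rule card_mono) (auto simp: nth_append)

lemma sampz_Nil: "sampz L [] j = {#}" by (simp add: sampz_def)

lemma filter_cong_lt: "(\<And>p. p < m \<Longrightarrow> P p = Q p) \<Longrightarrow> filter P [0..<m] = filter Q [0..<m]"
  by (rule filter_cong) auto

lemma sampz_ins: "sampz L (zs@[(Ins i,u)]) j = (if u < 2^(L-j) then add_mset (i,u) (sampz L zs j) else sampz L zs j)"
proof -
  let ?m = "length zs"
  let ?P = "\<lambda>p. alive (map fst zs) p \<and> snd (zs!p) < 2^(L-j)"
  let ?f = "\<lambda>p. (idx (fst (zs!p)), snd (zs!p))"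
  let ?P' = "\<lambda>p. alive (map fst (zs@[(Ins i,u)])) p \<and> snd ((zs@[(Ins i,u)])!p) < 2^(L-j)"
  let ?f' = "\<lambda>p. (idx (fst ((zs@[(Ins i,u)])!p)), snd ((zs@[(Ins i,u)])!p))"
  have "filter ?P' [0..<?m] = filter ?P [0..<?m]"
    by (rule filter_cong_lt) (simp add: alive_snoc nth_append)
  moreover have "?P' ?m = (u < 2^(L-j))" by (simp add: alive_snoc)
  ultimately have 1: "filter ?P' [0..<Suc ?m] = filter ?P [0..<?m] @ (if u < 2^(L-j) then [?m] else [])"
    by simp
  have 2: "map ?f' (filter ?P [0..<?m]) = map ?f (filter ?P [0..<?m])"
    by (rule map_cong) (auto simp: nth_append)
  have 3: "?f' ?m = (i,u)" by simp
  show ?thesis unfolding sampz_def length_append_singleton 1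
    by (simp only: map_append 2 mset_append) (auto simp: 3)
qed

lemma fm: "filter_mset P (mset (map f xs)) = mset (map f (filter (\<lambda>x. P (f x)) xs))"
  by (induction xs) auto

lemma sampz_forget: "sampz L (zs@[(Forget i,u)]) j = filter_mset (\<lambda>z. fst z \<noteq> i) (sampz L zs j)"
proof -
  let ?m = "length zs"
  let ?P = "\<lambda>p. alive (map fst zs) p \<and> snd (zs!p) < 2^(L-j)"
  let ?f = "\<lambda>p. (idx (fst (zs!p)), snd (zs!p))"
  have 1: "filter (\<lambda>p. alive (map fst (zs@[(Forget i,u)])) p \<and> snd ((zs@[(Forget i,u)])!p) < 2^(L-j)) [0..<Suc ?m]
      = filter (\<lambda>p. ?P p \<and> idx (fst (zs!p)) \<noteq> i) [0..<?m]"
    by (simp add: alive_snoc nth_append, rule filter_cong_lt) (auto simp: nth_append)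
  have 2: "map (\<lambda>p. (idx (fst ((zs@[(Forget i,u)])!p)), snd ((zs@[(Forget i,u)])!p))) (filter (\<lambda>p. ?P p \<and> idx (fst (zs!p)) \<noteq> i) [0..<?m])
     = map ?f (filter (\<lambda>p. ?P p \<and> idx (fst (zs!p)) \<noteq> i) [0..<?m])"
    by (rule map_cong) (auto simp: nth_append)
  have 3: "filter_mset (\<lambda>z. fst z \<noteq> i) (mset (map ?f (filter ?P [0..<?m]))) = mset (map ?f (filter (\<lambda>p. ?P p \<and> idx (fst (zs!p)) \<noteq> i) [0..<?m]))"
    by (simp only: fm filter_filter) (simp add: conj_commute)
  show ?thesis unfolding sampz_def length_append_singleton
    by (simp only: 1 2 3)
qed

lemma sampz_raise: "filter_mset (\<lambda>z. snd z < 2^(L - Suc j)) (sampz L zs j) = sampz L zs (Suc j)"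
proof -
  have le: "(2::nat)^(L - Suc j) \<le> 2^(L-j)" by (rule power_increasing) auto
  have "filter (\<lambda>p. (alive (map fst zs) p \<and> snd (zs!p) < 2^(L-j)) \<and> snd (zs!p) < 2^(L - Suc j)) [0..<length zs]
     = filter (\<lambda>p. alive (map fst zs) p \<and> snd (zs!p) < 2^(L - Suc j)) [0..<length zs]"
    by (rule filter_cong) (use le in \<open>auto intro: less_le_trans\<close>)
  then show ?thesis unfolding sampz_def
    by (simp only: fm filter_filter snd_conv)
qed

lemma raise_good:
  assumes "j \<le> js" "js < L" "size (sampz L zs js) \<le> cap"
  shows "\<exists>j'. j' \<le> js \<and> raise cap L j (sampz L zs j) = Some (j', sampz L zs j')"
  using assms
proof (induction "L - j" arbitrary: j rule: less_induct)
  case less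
  show ?case
  proof (cases "size (sampz L zs j) \<le> cap")
    case True
    then show ?thesis using less.prems by (subst raise.simps) auto
  next
    case False
    then have "j \<noteq> js" using less.prems by auto
    then have "Suc j \<le> js" "j < L" using less.prems by auto
    have "L - Suc j < L - j" using \<open>j < L\<close> by auto
    from less.hyps[OF this \<open>Suc j \<le> js\<close> less.prems(2,3)] obtain j' where
      "j' \<le> js" "raise cap L (Suc j) (sampz L zs (Suc j)) = Some (j', sampz L zs j')"
      by auto
    then show ?thesis using False \<open>j < L\<close> by (subst raise.simps) (auto simp: sampz_raise)
  qed
qed

definition vz :: "nat \<Rightarrow> (sop \<times> nat) list \<Rightarrow> bool" where
  "vz n zs \<longleftrightarrow> (\<forall>z\<in>set zs. idx (fst z) < n)"

lemma det_snoc: "det cap L n (zs@[(a,u)]) = tr cap L n (det cap L n zs) a u"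
  by (simp add: det_def)

lemma det_good:
  assumes "vz n zs" "js < L" "NZ L zs js \<le> cap"
  shows "\<exists>j \<le> js. det cap L n zs = Some (j, sampz L zs j)"
  using assms
proof (induction zs rule: rev_induct)
  case Nil
  then show ?case by (simp add: det_def sampz_Nil)
next
  case (snoc z zs)
  obtain a u where z: "z = (a,u)" by fastforce
  have "NZ L zs js \<le> cap" using NZ_mono[of L zs js z] snoc.prems by linarith
  moreover have "vz n zs" using snoc.prems by (simp add: vz_def)
  ultimately obtain j where j: "j \<le> js" "det cap L n zs = Some (j, sampz L zs j)"
    using snoc.IH snoc.prems by blast
  have an: "idx a < n" using snoc.prems z by (simp add: vz_def)
  show ?case
  proof (cases a)
    case (Ins i)
    have "size (sampz L (zs@[z]) js) \<le> cap" using sampz_le_NZ[of L "zs@[z]" js] snoc.prems by linarith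
    from raise_good[OF j(1) \<open>js < L\<close> this] obtain j' where
      "j' \<le> js" "raise cap L j (sampz L (zs@[z]) j) = Some (j', sampz L (zs@[z]) j')" by blast
    then show ?thesis using Ins z j an by (auto simp: det_snoc tr_def sampz_ins)
  next
    case (Forget i)
    then show ?thesis using z j by (auto simp: det_snoc tr_def sampz_forget)
  qed
qed

definition Sig :: "nat \<Rightarrow> nat \<Rightarrow> nat \<Rightarrow> st set" where
  "Sig cap L n = insert None {Some (j, S) | j S. j \<le> L \<and> size S \<le> cap \<and> set_mset S \<subseteq> {..<n} \<times> {..<2^L}}"

lemma raise_Sig:
  assumes "j \<le> L" "set_mset S \<subseteq> {..<n} \<times> {..<2^L}"
  shows "raise cap L j S \<in> Sig cap L n"
  using assms
proof (induction "L - j" arbitrary: j S rule: less_induct)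
  case less
  show ?case
  proof (cases "size S \<le> cap")
    case True
    then show ?thesis using less.prems by (subst raise.simps) (auto simp: Sig_def)
  next
    case False
    show ?thesis
    proof (cases "j < L")
      case True
      have "raise cap L (Suc j) (filter_mset (\<lambda>z. snd z < 2^(L - Suc j)) S) \<in> Sig cap L n"
        using less.prems True by (intro less.hyps) auto
      then show ?thesis using False True by (subst raise.simps) auto
    next
      case False
      then show ?thesis using \<open>\<not> size S \<le> cap\<close> by (subst raise.simps) (auto simp: Sig_def)
    qed
  qed
qed

lemma tr_Sig: assumes "s \<in> Sig cap L n" shows "tr cap L n s a u \<in> Sig cap L n"
proof (cases s)
  case None
  then show ?thesis by (simp add: tr_def Sig_def)
next
  case (Some js)
  then obtain j S where s: "s = Some (j, S)" "j \<le> L" "size S \<le> cap" "set_mset S \<subseteq> {..<n} \<times> {..<2^L}"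
    using assms by (auto simp: Sig_def)
  have pw: "(2::nat)^(L-j) \<le> 2^L" by (rule power_increasing) auto
  show ?thesis
  proof (cases a)
    case (Ins i)
    show ?thesis
    proof (cases "i < n")
      case True
      have "set_mset (if u < 2^(L-j) then add_mset (i,u) S else S) \<subseteq> {..<n} \<times> {..<2^L}"
        using s True pw by (auto intro: less_le_trans)
      then show ?thesis using s Ins True raise_Sig[OF s(2)] by (simp add: tr_def)
    next
      case False
      then show ?thesis using s Ins assms by (simp add: tr_def)
    qed
  next
    case (Forget i)
    have "size (filter_mset (\<lambda>z. fst z \<noteq> i) S) \<le> cap"
      using s(3) size_filter_mset_lesseq order_trans by blast
    then show ?thesis using s Forget by (auto simp: tr_def Sig_def)
  qed
qed


definition DL :: "nat \<Rightarrow> nat pmf" where "DL L = pmf_of_set {..<(2::nat)^L}"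
definition HH :: "nat \<Rightarrow> nat \<Rightarrow> (nat \<Rightarrow> nat) pmf" where "HH L m = Pi_pmf {..<m} 0 (\<lambda>_. DL L)"

definition arun :: "nat \<Rightarrow> nat \<Rightarrow> nat \<Rightarrow> sop list \<Rightarrow> st pmf" where
  "arun cap L n xs = foldl (\<lambda>p a. bind_pmf p (\<lambda>s. map_pmf (tr cap L n s a) (DL L))) (return_pmf (Some (0, {#}))) xs"

definition zh :: "sop list \<Rightarrow> (nat \<Rightarrow> nat) \<Rightarrow> (sop \<times> nat) list" where
  "zh xs h = zip xs (map h [0..<length xs])"

lemma zh_snoc: "zh (xs@[a]) h = zh xs h @ [(a, h (length xs))]"
  by (simp add: zh_def)

lemma zh_upd: "zh xs (h(length xs := y)) = zh xs h"
  unfolding zh_def by (intro arg_cong[where f="zip xs"] map_cong) auto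

lemma arun_snoc: "arun cap L n (xs@[a]) = bind_pmf (arun cap L n xs) (\<lambda>s. map_pmf (tr cap L n s a) (DL L))"
  by (simp add: arun_def)

lemma arun_eq: "arun cap L n xs = map_pmf (\<lambda>h. det cap L n (zh xs h)) (HH L (length xs))"
proof (induction xs rule: rev_induct)
  case Nil
  then show ?case by (simp add: arun_def HH_def det_def zh_def)
next
  case (snoc a xs)
  let ?m = "length xs"
  let ?F = "\<lambda>h. det cap L n (zh xs h)"
  have H: "HH L (Suc ?m) = do {y \<leftarrow> DL L; f \<leftarrow> HH L ?m; return_pmf (f(?m := y))}"
    unfolding HH_def lessThan_Suc by (rule Pi_pmf_insert') auto
  have "map_pmf (\<lambda>h. det cap L n (zh (xs@[a]) h)) (HH L (Suc ?m))
      = bind_pmf (DL L) (\<lambda>y. bind_pmf (HH L ?m) (\<lambda>f. return_pmf (tr cap L n (?F f) a y)))"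
    unfolding H map_bind_pmf map_return_pmf
    by (simp add: zh_snoc zh_upd det_snoc)
  also have "\<dots> = bind_pmf (HH L ?m) (\<lambda>f. bind_pmf (DL L) (\<lambda>y. return_pmf (tr cap L n (?F f) a y)))"
    by (rule bind_commute_pmf)
  also have "\<dots> = bind_pmf (map_pmf ?F (HH L ?m)) (\<lambda>s. map_pmf (tr cap L n s a) (DL L))"
    by (simp only: bind_map_pmf) (simp add: map_pmf_def)
  finally show ?case using snoc by (simp add: arun_snoc)
qed

lemma arun_Sig: "set_pmf (arun cap L n xs) \<subseteq> Sig cap L n"
proof (induction xs rule: rev_induct)
  case Nil
  then show ?case by (simp add: arun_def Sig_def)
next
  case (snoc a xs)
  then show ?case using tr_Sig by (fastforce simp: arun_snoc)
qed

lemma finite_Sig: "finite (Sig cap L n)"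
proof -
  define U where "U = {..<n} \<times> {..<(2::nat)^L}"
  define d where "d = (n, 0::nat)"
  have dU: "d \<notin> U" by (simp add: U_def d_def)
  define LS where "LS = {l. set l \<subseteq> insert d U \<and> length l = cap}"
  have "{S. size S \<le> cap \<and> set_mset S \<subseteq> U} \<subseteq> (\<lambda>l. mset (filter (\<lambda>x. x \<noteq> d) l)) ` LS"
  proof
    fix S assume S: "S \<in> {S. size S \<le> cap \<and> set_mset S \<subseteq> U}"
    obtain xs where xs: "mset xs = S" using ex_mset by blast
    define l where "l = xs @ replicate (cap - length xs) d"
    have "set xs \<subseteq> U" using S xs by auto
    then have "filter (\<lambda>x. x \<noteq> d) l = xs" using dU unfolding l_def
      by (auto simp: filter_id_conv)
    moreover have "l \<in> LS" using S xs \<open>set xs \<subseteq> U\<close> by (auto simp: LS_def l_def)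
    ultimately show "S \<in> (\<lambda>l. mset (filter (\<lambda>x. x \<noteq> d) l)) ` LS" using xs by force
  qed
  moreover have "finite LS" unfolding LS_def by (rule finite_lists_length_eq) (simp add: U_def)
  ultimately have fin: "finite {S. size S \<le> cap \<and> set_mset S \<subseteq> U}" by (meson finite_surj)
  have "Sig cap L n \<subseteq> insert None (Some ` ({..L} \<times> {S. size S \<le> cap \<and> set_mset S \<subseteq> U}))"
    by (auto simp: Sig_def U_def)
  then show ?thesis using fin by (meson finite.insertI finite_SigmaI finite_atMost finite_imageI finite_subset)
qed

lemma card_Sig: "card (Sig cap L n) \<le> 1 + (L+1) * (n * 2^L + 1)^cap"
proof -
  define U where "U = {..<n} \<times> {..<(2::nat)^L}"
  define d where "d = (n, 0::nat)"
  have dU: "d \<notin> U" by (simp add: U_def d_def)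
  define LS where "LS = {l. set l \<subseteq> insert d U \<and> length l = cap}"
  have sub: "{S. size S \<le> cap \<and> set_mset S \<subseteq> U} \<subseteq> (\<lambda>l. mset (filter (\<lambda>x. x \<noteq> d) l)) ` LS"
  proof
    fix S assume S: "S \<in> {S. size S \<le> cap \<and> set_mset S \<subseteq> U}"
    obtain xs where xs: "mset xs = S" using ex_mset by blast
    define l where "l = xs @ replicate (cap - length xs) d"
    have "set xs \<subseteq> U" using S xs by auto
    then have "filter (\<lambda>x. x \<noteq> d) l = xs" using dU unfolding l_def
      by (auto simp: filter_id_conv)
    moreover have "l \<in> LS" using S xs \<open>set xs \<subseteq> U\<close> by (auto simp: LS_def l_def)
    ultimately show "S \<in> (\<lambda>l. mset (filter (\<lambda>x. x \<noteq> d) l)) ` LS" using xs by force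
  qed
  have finU: "finite U" by (simp add: U_def)
  have cLS: "card LS = (n * 2^L + 1)^cap"
    unfolding LS_def card_lists_length_eq[OF finite_insert[THEN iffD2, OF finU]]
    using dU finU by (simp add: U_def card_cartesian_product)
  have fLS: "finite LS" unfolding LS_def by (rule finite_lists_length_eq) (simp add: U_def)
  have c1: "card {S. size S \<le> cap \<and> set_mset S \<subseteq> U} \<le> (n * 2^L + 1)^cap"
    using card_mono[OF finite_imageI[OF fLS] sub] card_image_le[OF fLS, of "\<lambda>l. mset (filter (\<lambda>x. x \<noteq> d) l)"] cLS by linarith
  have fin: "finite {S. size S \<le> cap \<and> set_mset S \<subseteq> U}"
    using finite_subset[OF sub finite_imageI[OF fLS]] .
  have "Sig cap L n \<subseteq> insert None (Some ` ({..L} \<times> {S. size S \<le> cap \<and> set_mset S \<subseteq> U}))"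
    by (auto simp: Sig_def U_def)
  then have "card (Sig cap L n) \<le> card (insert None (Some ` ({..L} \<times> {S. size S \<le> cap \<and> set_mset S \<subseteq> U})))"
    using fin by (intro card_mono) auto
  also have "\<dots> \<le> 1 + card (Some ` ({..L} \<times> {S. size S \<le> cap \<and> set_mset S \<subseteq> U}))"
    using fin by (simp add: card_insert_if)
  also have "\<dots> \<le> 1 + (L+1) * card {S. size S \<le> cap \<and> set_mset S \<subseteq> U}"
    by (simp add: card_image card_cartesian_product)
  also have "\<dots> \<le> 1 + (L+1) * (n * 2^L + 1)^cap"
    using mult_le_mono2[OF c1, of "L+1"] by linarith
  finally show ?thesis .
qed

definition outf :: "st \<Rightarrow> real" where
  "outf s = (case s of None \<Rightarrow> 0 | Some (j, S) \<Rightarrow> real (size S) * 2^j)"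

definition encS :: "nat \<Rightarrow> nat \<Rightarrow> nat \<Rightarrow> st \<Rightarrow> nat" where
  "encS cap L n = (SOME h. bij_betw h (Sig cap L n) {0..<card (Sig cap L n)})"

lemma encS_bij: "bij_betw (encS cap L n) (Sig cap L n) {0..<card (Sig cap L n)}"
  unfolding encS_def by (rule someI_ex[OF ex_bij_betw_finite_nat[OF finite_Sig]])

definition alg :: "nat \<Rightarrow> nat \<Rightarrow> nat \<Rightarrow> stream_alg" where
  "alg cap L n = (let e = encS cap L n; d = inv_into (Sig cap L n) e in
     \<lparr> init = return_pmf (e (Some (0, {#}))),
       step = (\<lambda>s a. if s < card (Sig cap L n) then map_pmf (\<lambda>u. e (tr cap L n (d s) a u)) (DL L) else return_pmf 0),
       out_fn = (\<lambda>s. outf (d s)) \<rparr>)"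

lemma run_alg_eq: "run_alg (alg cap L n) xs = map_pmf (encS cap L n) (arun cap L n xs)"
proof (induction xs rule: rev_induct)
  case Nil
  then show ?case by (simp add: run_alg_def arun_def alg_def Let_def)
next
  case (snoc a xs)
  let ?e = "encS cap L n" and ?S = "Sig cap L n"
  have "run_alg (alg cap L n) (xs@[a]) = bind_pmf (run_alg (alg cap L n) xs) (\<lambda>s. step (alg cap L n) s a)"
    by (simp add: run_alg_def)
  also have "\<dots> = bind_pmf (arun cap L n xs) (\<lambda>t. step (alg cap L n) (?e t) a)"
    by (simp add: snoc bind_map_pmf)
  also have "\<dots> = bind_pmf (arun cap L n xs) (\<lambda>t. map_pmf (\<lambda>u. ?e (tr cap L n t a u)) (DL L))"
  proof (rule bind_pmf_cong[OF refl])
    fix t assume "t \<in> set_pmf (arun cap L n xs)"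
    then have t: "t \<in> ?S" using arun_Sig by blast
    then have "?e t < card ?S" "inv_into ?S ?e (?e t) = t"
      using encS_bij[of cap L n] by (auto simp: bij_betw_def)
    then show "step (alg cap L n) (?e t) a = map_pmf (\<lambda>u. ?e (tr cap L n t a u)) (DL L)"
      by (simp add: alg_def Let_def)
  qed
  also have "\<dots> = map_pmf ?e (arun cap L n (xs@[a]))"
    by (simp add: arun_snoc map_bind_pmf pmf.map_comp o_def)
  finally show ?case .
qed

lemma out_dist_eq: "out_dist (alg cap L n) xs = map_pmf (\<lambda>h. outf (det cap L n (zh xs h))) (HH L (length xs))"
proof -
  let ?e = "encS cap L n" and ?S = "Sig cap L n"
  have "out_dist (alg cap L n) xs = map_pmf (\<lambda>t. outf (inv_into ?S ?e (?e t))) (arun cap L n xs)"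
    unfolding out_dist_def run_alg_eq by (simp add: pmf.map_comp o_def alg_def Let_def)
  also have "\<dots> = map_pmf outf (arun cap L n xs)"
  proof (rule map_pmf_cong[OF refl])
    fix t assume "t \<in> set_pmf (arun cap L n xs)"
    then have t: "t \<in> ?S" using arun_Sig by blast
    then show "outf (inv_into ?S ?e (?e t)) = outf t"
      using encS_bij[of cap L n] by (simp add: bij_betw_def)
  qed
  finally show ?thesis by (simp add: arun_eq pmf.map_comp o_def)
qed

lemma alg_bits:
  assumes "card (Sig cap L n) \<le> 2^b"
  shows "uses_bits (alg cap L n) b"
proof -
  let ?e = "encS cap L n" and ?S = "Sig cap L n"
  have "Some (0, {#}) \<in> ?S" by (simp add: Sig_def)
  then have "?e (Some (0, {#})) < card ?S" using encS_bij[of cap L n] by (auto simp: bij_betw_def)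
  moreover have "\<And>t. t \<in> ?S \<Longrightarrow> ?e t < 2^b"
    by (meson assms atLeastLessThan_iff bij_betwE encS_bij less_le_trans)
  moreover have "\<And>s. s < card ?S \<Longrightarrow> inv_into ?S ?e s \<in> ?S"
    using encS_bij[of cap L n] by (metis atLeastLessThan_iff bij_betw_imp_surj_on inv_into_into zero_le)
  ultimately show ?thesis using assms tr_Sig
    unfolding uses_bits_def alg_def Let_def
    by (auto simp: DL_def)
qed


lemma set_DL: "set_pmf (DL L) = {..<2^L}"
  unfolding DL_def by (subst set_pmf_of_set) (auto simp: lessThan_empty_iff)

lemma finite_set_HH: "finite (set_pmf (HH L m))"
  unfolding HH_def by (subst set_Pi_pmf) (auto simp: set_DL intro!: finite_PiE_dflt)

lemma integrable_HH[simp]: "integrable (measure_pmf (HH L m)) (f :: _ \<Rightarrow> real)"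
  by (rule integrable_measure_pmf_finite[OF finite_set_HH])

lemma integrable_DL[simp]: "integrable (measure_pmf (DL L)) (f :: _ \<Rightarrow> real)"
  by (rule integrable_measure_pmf_finite) (simp add: set_DL)

lemma sum_if_less:
  fixes a b :: real and K N :: nat
  assumes "K \<le> N"
  shows "(\<Sum>v<N. if v < K then a else b) = K * a + (N - K) * b"
proof -
  have "(\<Sum>v<N. if v < K then a else b) = (\<Sum>v\<in>{..<N} \<inter> {v. v < K}. a) + (\<Sum>v\<in>{..<N} \<inter> - {v. v < K}. b)"
    by (rule sum.If_cases) simp
  moreover have "{..<N} \<inter> {v. v < K} = {..<K}" using assms by auto
  moreover have "{..<N} \<inter> - {v. v < K} = {K..<N}" by auto
  ultimately show ?thesis using assms by simp
qed

lemma E_DL: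
  fixes a b :: real
  assumes "K \<le> 2^L"
  shows "measure_pmf.expectation (DL L) (\<lambda>v. if v < K then a else b) = (K * a + (2^L - K) * b) / 2^L"
  unfolding DL_def
  by (subst integral_pmf_of_set) (use assms in \<open>auto simp: sum_if_less of_nat_diff lessThan_empty_iff\<close>)

definition Ycnt :: "nat \<Rightarrow> (nat \<Rightarrow> bool) \<Rightarrow> nat \<Rightarrow> (nat \<Rightarrow> nat) \<Rightarrow> nat" where
  "Ycnt m Q K h = card {p. p < m \<and> Q p \<and> h p < K}"

lemma exp_Ycnt: "exp (s * real (Ycnt m Q K h)) = (\<Prod>p<m. if Q p \<and> h p < K then exp s else 1)"
proof -
  have "real (Ycnt m Q K h) = (\<Sum>p<m. if Q p \<and> h p < K then 1 else 0)"
  proof -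
    have "{p. p < m \<and> Q p \<and> h p < K} = {p\<in>{..<m}. Q p \<and> h p < K}" by auto
    then have "real (Ycnt m Q K h) = (\<Sum>p\<in>{p\<in>{..<m}. Q p \<and> h p < K}. 1)"
      unfolding Ycnt_def by simp
    also have "\<dots> = (\<Sum>p<m. if Q p \<and> h p < K then 1 else 0)"
      by (rule sum.inter_filter) simp
    finally show ?thesis .
  qed
  then have "exp (s * real (Ycnt m Q K h)) = exp (\<Sum>p<m. s * (if Q p \<and> h p < K then 1 else 0))"
    by (simp add: sum_distrib_left)
  also have "\<dots> = (\<Prod>p<m. exp (s * (if Q p \<and> h p < K then 1 else 0)))"
    by (rule exp_sum) simp
  also have "\<dots> = (\<Prod>p<m. if Q p \<and> h p < K then exp s else 1)"
    by (rule prod.cong) auto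
  finally show ?thesis .
qed

lemma mgf_Ycnt:
  fixes m :: nat and Q :: "nat \<Rightarrow> bool"
  assumes "K \<le> 2^L"
  defines "mu \<equiv> real (card {p. p < m \<and> Q p}) * (K / 2^L)"
  shows "measure_pmf.expectation (HH L m) (\<lambda>h. exp (s * real (Ycnt m Q K h))) \<le> exp (mu * (exp s - 1))"
proof -
  let ?q = "real K / 2^L"
  have q01: "0 \<le> ?q" "?q \<le> 1" using assms by (auto simp: field_simps)
  have "measure_pmf.expectation (HH L m) (\<lambda>h. exp (s * real (Ycnt m Q K h)))
      = measure_pmf.expectation (HH L m) (\<lambda>h. \<Prod>p<m. if Q p \<and> h p < K then exp s else 1)"
    by (simp add: exp_Ycnt)
  also have "\<dots> = (\<Prod>p<m. measure_pmf.expectation (DL L) (\<lambda>v. if Q p \<and> v < K then exp s else 1))"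
    unfolding HH_def by (rule expectation_prod_Pi_pmf) auto
  also have "\<dots> = (\<Prod>p<m. if Q p then 1 + ?q * (exp s - 1) else 1)"
  proof (rule prod.cong[OF refl])
    fix p
    show "measure_pmf.expectation (DL L) (\<lambda>v. if Q p \<and> v < K then exp s else 1) = (if Q p then 1 + ?q * (exp s - 1) else 1)"
    proof (cases "Q p")
      case True
      then show ?thesis using E_DL[OF assms(1), of "exp s" 1] assms(1)
        by (simp add: field_simps of_nat_diff)
    next
      case False
      then show ?thesis by simp
    qed
  qed
  also have "\<dots> \<le> (\<Prod>p<m. if Q p then exp (?q * (exp s - 1)) else 1)"
  proof (rule prod_mono)
    fix p
    have "0 \<le> 1 + ?q * (exp s - 1)"
    proof -
      have "1 + ?q * (exp s - 1) = (1 - ?q) + ?q * exp s" by (simp only: right_diff_distrib mult_1_right)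
      also have "\<dots> \<ge> 0" using q01 by simp
      finally show ?thesis .
    qed
    then show "0 \<le> (if Q p then 1 + ?q * (exp s - 1) else 1) \<and>
      (if Q p then 1 + ?q * (exp s - 1) else 1) \<le> (if Q p then exp (?q * (exp s - 1)) else 1)"
      using exp_ge_add_one_self[of "?q * (exp s - 1)"] by (simp only: split: if_split) simp
  qed
  also have "\<dots> = exp (?q * (exp s - 1)) ^ card {p. p < m \<and> Q p}"
  proof -
    have "(\<Prod>p<m. if Q p then exp (?q * (exp s - 1)) else 1) = (\<Prod>p\<in>{..<m} \<inter> {p. Q p}. exp (?q * (exp s - 1))) * (\<Prod>p\<in>{..<m} \<inter> - {p. Q p}. 1)"
      by (rule prod.If_cases) simp
    moreover have "{..<m} \<inter> {p. Q p} = {p. p < m \<and> Q p}" by auto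
    ultimately show ?thesis by simp
  qed
  also have "\<dots> = exp (mu * (exp s - 1))"
    unfolding mu_def by (simp add: exp_of_nat_mult[symmetric] algebra_simps)
  finally show ?thesis .
qed

lemma tail_Ycnt:
  fixes m :: nat and Q :: "nat \<Rightarrow> bool"
  assumes "K \<le> 2^L"
  defines "mu \<equiv> real (card {p. p < m \<and> Q p}) * (K / 2^L)"
  shows "measure_pmf.prob (HH L m) {h. exp (s * t) \<le> exp (s * real (Ycnt m Q K h))} \<le> exp (mu * (exp s - 1) - s * t)"
proof -
  have "measure_pmf.prob (HH L m) {h. exp (s * t) \<le> exp (s * real (Ycnt m Q K h))}
      \<le> measure_pmf.expectation (HH L m) (\<lambda>h. exp (s * real (Ycnt m Q K h))) / exp (s * t)"
    using integral_Markov_inequality_measure[of "measure_pmf (HH L m)" "\<lambda>h. exp (s * real (Ycnt m Q K h))" UNIV "exp (s*t)"]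
    by simp
  also have "\<dots> \<le> exp (mu * (exp s - 1)) / exp (s * t)"
    using mgf_Ycnt[OF assms(1), where m=m and Q=Q and s=s] unfolding mu_def by (simp add: divide_right_mono)
  also have "\<dots> = exp (mu * (exp s - 1) - s * t)" by (simp add: exp_diff)
  finally show ?thesis .
qed

lemma exp_neg_le: assumes "0 \<le> (x::real)" shows "exp (-x) \<le> 1 - x + x^2/2"
proof -
  have a: "1 + x + x^2/2 \<le> exp x" using exp_lower_Taylor_quadratic[OF assms] .
  have pos: "0 < 1 + x + x^2/2" using assms by (simp add: add_pos_nonneg)
  have "1 \<le> (1 + x + x^2/2) * (1 - x + x^2/2)"
  proof -
    have "(1 + x + x^2/2) * (1 - x + x^2/2) = 1 + x^4/4" by (simp add: algebra_simps power2_eq_square power4_eq_xxxx)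
    then show ?thesis by simp
  qed
  then have "1 / (1 + x + x^2/2) \<le> 1 - x + x^2/2" using pos by (simp add: field_simps)
  moreover have "exp (-x) \<le> 1 / (1 + x + x^2/2)"
    using a pos by (simp add: exp_minus field_simps)
  ultimately show ?thesis by linarith
qed

lemma chernoff_upper:
  fixes m :: nat and Q :: "nat \<Rightarrow> bool"
  assumes "K \<le> 2^L" "0 < eps" "eps \<le> 1"
  defines "mu \<equiv> real (card {p. p < m \<and> Q p}) * (K / 2^L)"
  shows "measure_pmf.prob (HH L m) {h. (1+eps) * mu \<le> real (Ycnt m Q K h)} \<le> exp (-(eps^2 * mu / 4))"
proof -
  let ?s = "eps/2"
  have mu0: "0 \<le> mu" unfolding mu_def by simp
  have "{h. (1+eps) * mu \<le> real (Ycnt m Q K h)} = {h. exp (?s * ((1+eps) * mu)) \<le> exp (?s * real (Ycnt m Q K h))}"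
    using assms(2) by auto
  then have "measure_pmf.prob (HH L m) {h. (1+eps) * mu \<le> real (Ycnt m Q K h)} \<le> exp (mu * (exp ?s - 1) - ?s * ((1+eps) * mu))"
    using tail_Ycnt[OF assms(1), where m=m and Q=Q and s="?s" and t="(1+eps) * mu"] unfolding mu_def by simp
  also have "\<dots> \<le> exp (-(eps^2 * mu / 4))"
  proof -
    have "exp ?s \<le> 1 + ?s + ?s^2" using exp_bound[of ?s] assms by simp
    then have "mu * (exp ?s - 1) \<le> mu * (?s + ?s^2)" using mu0 by (intro mult_left_mono) auto
    moreover have "mu * (?s + ?s^2) - ?s * ((1+eps) * mu) = -(eps^2 * mu / 4)"
      by (simp add: power2_eq_square field_simps)
    ultimately show ?thesis by simp
  qed
  finally show ?thesis .
qed

lemma chernoff_lower: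
  fixes m :: nat and Q :: "nat \<Rightarrow> bool"
  assumes "K \<le> 2^L" "0 < eps" "eps \<le> 1"
  defines "mu \<equiv> real (card {p. p < m \<and> Q p}) * (K / 2^L)"
  shows "measure_pmf.prob (HH L m) {h. real (Ycnt m Q K h) \<le> (1-eps) * mu} \<le> exp (-(eps^2 * mu / 4))"
proof -
  let ?s = "-eps"
  have mu0: "0 \<le> mu" unfolding mu_def by simp
  have "{h. real (Ycnt m Q K h) \<le> (1-eps) * mu} = {h. exp (?s * ((1-eps) * mu)) \<le> exp (?s * real (Ycnt m Q K h))}"
    using assms(2) by auto
  then have "measure_pmf.prob (HH L m) {h. real (Ycnt m Q K h) \<le> (1-eps) * mu} \<le> exp (mu * (exp ?s - 1) - ?s * ((1-eps) * mu))"
    using tail_Ycnt[OF assms(1), where m=m and Q=Q and s="?s" and t="(1-eps) * mu"] unfolding mu_def by simp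
  also have "\<dots> \<le> exp (-(eps^2 * mu / 4))"
  proof -
    have "exp ?s \<le> 1 - eps + eps^2/2" using exp_neg_le[of eps] assms by simp
    then have "mu * (exp ?s - 1) \<le> mu * (- eps + eps^2/2)" using mu0 by (intro mult_left_mono) auto
    moreover have "0 \<le> eps^2 * mu" using mu0 by simp
    moreover have "mu * (- eps + eps^2/2) - ?s * ((1-eps) * mu) = -(eps^2 * mu / 2)"
      by (simp add: power2_eq_square field_simps)
    ultimately show ?thesis by simp
  qed
  finally show ?thesis .
qed

lemma chernoff_big:
  fixes m :: nat and Q :: "nat \<Rightarrow> bool"
  assumes "K \<le> 2^L"
  defines "mu \<equiv> real (card {p. p < m \<and> Q p}) * (K / 2^L)"
  shows "measure_pmf.prob (HH L m) {h. t \<le> real (Ycnt m Q K h)} \<le> exp (mu - ln 2 * t)"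
proof -
  let ?s = "ln 2 :: real"
  have "{h. t \<le> real (Ycnt m Q K h)} = {h. exp (?s * t) \<le> exp (?s * real (Ycnt m Q K h))}"
    by auto
  then show ?thesis
    using tail_Ycnt[OF assms(1), where m=m and Q=Q and s="?s" and t=t] unfolding mu_def by simp
qed


lemma zh_len[simp]: "length (zh xs h) = length xs" by (simp add: zh_def)
lemma zh_fst[simp]: "map fst (zh xs h) = xs" by (simp add: zh_def)
lemma zh_nth: "p < length xs \<Longrightarrow> zh xs h ! p = (xs!p, h p)" by (simp add: zh_def)

lemma zh_vz: "valid_stream n xs \<Longrightarrow> vz n (zh xs h)"
  unfolding vz_def zh_def
  by (auto dest!: set_zip_leftD simp: valid_stream_def split: sop.splits)
     (metis idx.simps sop.exhaust sop.simps)

lemma zh_NZ: "NZ L (zh xs h) j = Ycnt (length xs) (\<lambda>p. is_ins (xs!p)) (2^(L-j)) h"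
  unfolding NZ_def Ycnt_def by (rule arg_cong[where f=card]) (auto simp: zh_nth)

lemma zh_size: "size (sampz L (zh xs h) j) = Ycnt (length xs) (alive xs) (2^(L-j)) h"
  unfolding sampz_size Ycnt_def by (rule arg_cong[where f=card]) (auto simp: zh_nth dest: alive_lt)

lemma pow2_ge: "Suc i \<le> 2^i"
  by (induction i) auto

lemma geo_bound:
  fixes r :: real
  assumes "0 \<le> r" "r < 1"
  shows "(\<Sum>i<js. r^(i+1)) \<le> r / (1 - r)"
proof -
  have "(\<Sum>i<js. r^(i+1)) = r * (\<Sum>i<js. r^i)" by (simp add: sum_distrib_left)
  also have "\<dots> = r * ((1 - r^js) / (1 - r))" using assms by (simp add: sum_gp_strict)
  also have "\<dots> \<le> r * (1 / (1 - r))"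
    using assms by (intro mult_left_mono divide_right_mono) auto
  finally show ?thesis by simp
qed

lemma sum_reindex_js:
  fixes g :: "nat \<Rightarrow> real"
  shows "(\<Sum>j\<in>{1..js}. g (js - j)) = (\<Sum>i<js. g i)"
  by (rule sum.reindex_bij_witness[where i="\<lambda>i. js - i" and j="\<lambda>j. js - j"]) auto

lemma js_exists:
  fixes G M T \<alpha> :: real
  assumes "1 \<le> T" "0 < \<alpha>" "\<alpha> < 1" "(1 - \<alpha>) * M \<le> G" "0 \<le> G" "G \<le> 2^(L-1)" "1 \<le> L"
  shows "\<exists>js. js < L \<and> M / 2^js \<le> 2 * T / (1 - \<alpha>) \<and> (\<forall>j. 1 \<le> j \<and> j \<le> js \<longrightarrow> T * 2^(js - j) \<le> G / 2^j)"
proof (cases "G < T")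
  case True
  have "M \<le> G / (1 - \<alpha>)" using assms by (simp add: field_simps)
  also have "\<dots> \<le> 2 * T / (1 - \<alpha>)" using True assms by (intro divide_right_mono) auto
  finally show ?thesis using assms by (intro exI[of _ 0]) auto
next
  case False
  define S where "S = {j. j \<le> L - 1 \<and> T * 2^j \<le> G}"
  have finS: "finite S" unfolding S_def by auto
  have S0: "0 \<in> S" using False unfolding S_def by auto
  define js where "js = Max S"
  have jsS: "js \<in> S" unfolding js_def using finS S0 by (intro Max_in) auto
  then have js1: "js \<le> L - 1" "T * 2^js \<le> G" unfolding S_def by auto
  have up: "G < T * 2^(Suc js)"
  proof (cases "Suc js \<le> L - 1")
    case True
    then have "Suc js \<notin> S" using Max_ge[OF finS, of "Suc js"] unfolding js_def by auto
    then show ?thesis using True unfolding S_def by auto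
  next
    case False
    then have "Suc js = L" using js1 assms by linarith
    have "G \<le> 2^(L-1)" using assms by simp
    also have "(2::real)^(L-1) < 2^L" using assms by simp
    also have "(2::real)^L \<le> T * 2^L" using assms by simp
    finally show ?thesis using \<open>Suc js = L\<close> by simp
  qed
  have "M \<le> G / (1 - \<alpha>)" using assms by (simp add: field_simps)
  then have "M / 2^js \<le> G / (1 - \<alpha>) / 2^js" by (intro divide_right_mono) auto
  also have "\<dots> = (G / 2^js) / (1 - \<alpha>)" by simp
  also have "\<dots> \<le> 2 * T / (1 - \<alpha>)"
  proof (rule divide_right_mono)
    show "G / 2^js \<le> 2 * T" using up by (simp add: pos_divide_le_eq mult_ac)
  qed (use assms in auto)
  finally have a: "M / 2^js \<le> 2 * T / (1 - \<alpha>)" .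
  have b: "T * 2^(js - j) \<le> G / 2^j" if "1 \<le> j" "j \<le> js" for j
  proof -
    have "T * 2^(js - j) = T * 2^js / 2^j" using that by (simp add: power_diff)
    also have "\<dots> \<le> G / 2^j" using js1 by (simp add: divide_right_mono)
    finally show ?thesis .
  qed
  show ?thesis using a b js1 assms by (intro exI[of _ js]) auto
qed


lemma set_HH: "h \<in> set_pmf (HH L m) \<Longrightarrow> p < m \<Longrightarrow> h p < 2^L"
  unfolding HH_def by (subst (asm) set_Pi_pmf) (auto simp: PiE_dflt_def set_DL)

lemma ln8: "2 \<le> ln (8::real)"
proof -
  have "ln (8::real) = ln (2^3)" by simp
  also have "\<dots> = 3 * ln 2" by (subst ln_realpow) auto
  finally show ?thesis using ln2_ge_two_thirds by simp
qed

lemma exp_pow_bound: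
  fixes c :: real and i :: nat
  assumes "0 < c" "c * 2^i \<le> x"
  shows "exp (- x) \<le> exp (- c) ^ (Suc i)"
proof -
  have "real (Suc i) \<le> 2^i" using pow2_ge[of i] by (metis of_nat_le_iff of_nat_numeral of_nat_power)
  then have "c * real (Suc i) \<le> x" using assms by (meson mult_left_mono less_imp_le order_trans)
  then have "exp (- x) \<le> exp (real (Suc i) * (- c))" by (simp add: mult.commute)
  also have "\<dots> = exp (- c) ^ (Suc i)" by (rule exp_of_nat_mult)
  finally show ?thesis .
qed

lemma prob_main:
  fixes \<epsilon> \<alpha> \<delta> T :: real
  assumes eps: "0 < \<epsilon>" "\<epsilon> \<le> 1" and al: "0 < \<alpha>" "\<alpha> < 1" and de: "0 < \<delta>" "\<delta> < 1"
    and T_def: "T = 4 * ln (8 / \<delta>) / \<epsilon>^2"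
    and capb: "2 * (2 * T / (1 - \<alpha>) + ln (2 / \<delta>)) \<le> real cap"
    and valid: "valid_stream n xs" and len: "length xs \<le> 2^(L-1)" and L1: "1 \<le> L"
    and rf: "rfds \<alpha> n xs"
  shows "measure_pmf.prob (out_dist (alg cap L n) xs)
             {x. \<bar>x - F1 n (freq_g xs)\<bar> \<le> \<epsilon> * F1 n (freq_g xs)} \<ge> 1 - \<delta>"
proof -
  define m where "m = length xs"
  define G where "G = real (card {p. alive xs p})"
  define M where "M = real (card {p. p < m \<and> is_ins (xs!p)})"
  have FG: "F1 n (freq_g xs) = G" using F1_g[OF valid] by (simp add: G_def)
  have FM: "F1 n (freq_f xs) = M" using F1_f[OF valid] by (simp add: M_def m_def)
  have GM: "(1 - \<alpha>) * M \<le> G" using rf FG FM by (simp add: rfds_def)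
  have aliveset: "{p. p < m \<and> alive xs p} = {p. alive xs p}" by (auto simp: m_def dest: alive_lt)
  have G0: "0 \<le> G" by (simp add: G_def)
  have Gm: "G \<le> 2^(L-1)"
  proof -
    have "card {p. alive xs p} \<le> card {..<m}"
      by (rule card_mono) (auto simp: m_def dest: alive_lt)
    then have "G \<le> m" by (simp add: G_def)
    also have "real m \<le> 2^(L-1)" using len unfolding m_def by (metis of_nat_le_iff of_nat_numeral of_nat_power)
    finally show ?thesis .
  qed
  have lnd: "2 \<le> ln (8 / \<delta>)"
  proof -
    have "ln 8 \<le> ln (8 / \<delta>)" using de by (subst ln_le_cancel_iff) (auto simp: field_simps)
    then show ?thesis using ln8 by linarith
  qed
  have e2: "\<epsilon>^2 \<le> 1" "0 < \<epsilon>^2" using eps by (auto simp: power_le_one)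
  have T1: "1 \<le> T"
  proof -
    have "4 * ln (8 / \<delta>) / \<epsilon>^2 \<ge> 4 * ln (8 / \<delta>)" using e2 lnd
      by (simp add: le_divide_eq)
    then show ?thesis using T_def lnd by linarith
  qed
  obtain js where js: "js < L" "M / 2^js \<le> 2 * T / (1 - \<alpha>)"
      "\<And>j. 1 \<le> j \<Longrightarrow> j \<le> js \<Longrightarrow> T * 2^(js - j) \<le> G / 2^j"
    using js_exists[OF T1 al GM G0 Gm L1] by blast
  define Xc where "Xc j h = real (Ycnt m (alive xs) (2^(L-j)) h)" for j h
  define Nc where "Nc h = real (Ycnt m (\<lambda>p. is_ins (xs!p)) (2^(L-js)) h)" for h
  define B0 where "B0 = {h. real cap + 1 \<le> Nc h}"
  define B1 where "B1 j = {h. (1+\<epsilon>) * (G / 2^j) \<le> Xc j h}" for j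
  define B2 where "B2 j = {h. Xc j h \<le> (1-\<epsilon>) * (G / 2^j)}" for j
  define Bad where "Bad = B0 \<union> (\<Union>j\<in>{1..js}. B1 j \<union> B2 j)"
  let ?good = "{x. \<bar>x - F1 n (freq_g xs)\<bar> \<le> \<epsilon> * F1 n (freq_g xs)}"
  let ?f = "\<lambda>h. outf (det cap L n (zh xs h))"
  have mu_j: "real (card {p. p < m \<and> alive xs p}) * (real (2^(L-j)) / 2^L) = G / 2^j" if "j \<le> L" for j
  proof -
    have "real (2^(L-j)) = (2::real)^L / 2^j" using that by (subst of_nat_power) (simp add: power_diff)
    then show ?thesis by (simp add: aliveset G_def)
  qed
  have mu_N: "real (card {p. p < m \<and> is_ins (xs!p)}) * (real (2^(L-js)) / 2^L) = M / 2^js"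
  proof -
    have "real (2^(L-js)) = (2::real)^L / 2^js" using js by (subst of_nat_power) (simp add: power_diff)
    then show ?thesis by (simp add: M_def)
  qed
  have goodh: "?f h \<in> ?good" if h: "h \<in> set_pmf (HH L m)" "h \<notin> Bad" for h
  proof -
    have "Nc h < real cap + 1" using h unfolding Bad_def B0_def by auto
    then have "NZ L (zh xs h) js \<le> cap" unfolding Nc_def zh_NZ m_def by linarith
    from det_good[OF zh_vz[OF valid] js(1) this] obtain j where
      j: "j \<le> js" "det cap L n (zh xs h) = Some (j, sampz L (zh xs h) j)" by blast
    have fj: "?f h = Xc j h * 2^j" using j by (simp add: outf_def zh_size Xc_def m_def)
    show ?thesis
    proof (cases "j = 0")
      case True
      have "{p. p < m \<and> alive xs p \<and> h p < 2^L} = {p. alive xs p}"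
        using set_HH[OF h(1)] by (auto simp: m_def dest: alive_lt)
      then have "Xc 0 h = G" by (simp add: Xc_def Ycnt_def G_def)
      then show ?thesis using fj True FG G0 eps by simp
    next
      case False
      then have j1: "1 \<le> j" by simp
      have "h \<notin> B1 j" "h \<notin> B2 j" using h j j1 unfolding Bad_def by auto
      then have "Xc j h < (1+\<epsilon>) * (G / 2^j)" "(1-\<epsilon>) * (G / 2^j) < Xc j h"
        unfolding B1_def B2_def by auto
      then have "Xc j h * 2^j < (1+\<epsilon>) * G" "(1-\<epsilon>) * G < Xc j h * 2^j"
        by (simp_all add: field_simps)
      then show ?thesis using fj FG by (simp add: abs_le_iff algebra_simps)
    qed
  qed
  have PB0: "measure_pmf.prob (HH L m) B0 \<le> \<delta> / 2"
  proof -
    have "measure_pmf.prob (HH L m) B0 \<le> exp (M / 2^js - ln 2 * (real cap + 1))"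
      using chernoff_big[where K="2^(L-js)" and L=L and m=m and Q="\<lambda>p. is_ins (xs!p)" and t="real cap + 1"]
      unfolding mu_N B0_def Nc_def by (simp add: power_increasing)
    also have "\<dots> \<le> exp (ln (\<delta> / 2))"
    proof -
      have l2: "0 < ln (2 / \<delta>)" using de by simp
      have "M / 2^js \<le> 2 * T / (1 - \<alpha>)" by (rule js(2))
      moreover have "2/3 * (real cap + 1) \<le> ln 2 * (real cap + 1)"
        using ln2_ge_two_thirds by (intro mult_right_mono) auto
      moreover have "ln (\<delta> / 2) = - ln (2 / \<delta>)" using de by (simp add: ln_div)
      moreover have "0 \<le> M / 2^js" by (simp add: M_def)
      ultimately show ?thesis using capb l2 by simp
    qed
    also have "\<dots> = \<delta> / 2" using de by simp
    finally show ?thesis .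
  qed
  have PB12: "measure_pmf.prob (HH L m) (B1 j) + measure_pmf.prob (HH L m) (B2 j) \<le> 2 * (\<delta>/8)^(Suc (js - j))"
    if j: "j \<in> {1..js}" for j
  proof -
    have jL: "j \<le> L" using j js by auto
    have K: "(2::nat)^(L-j) \<le> 2^L" by (simp add: power_increasing)
    have p1: "measure_pmf.prob (HH L m) (B1 j) \<le> exp (-(\<epsilon>^2 * (G / 2^j) / 4))"
      using chernoff_upper[OF K eps, where m=m and Q="alive xs"] unfolding mu_j[OF jL] B1_def Xc_def .
    have p2: "measure_pmf.prob (HH L m) (B2 j) \<le> exp (-(\<epsilon>^2 * (G / 2^j) / 4))"
      using chernoff_lower[OF K eps, where m=m and Q="alive xs"] unfolding mu_j[OF jL] B2_def Xc_def .
    have "ln (8/\<delta>) * 2^(js - j) \<le> \<epsilon>^2 * (G / 2^j) / 4"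
    proof -
      have "T * 2^(js - j) \<le> G / 2^j" using js(3) j by auto
      then have "\<epsilon>^2 * (T * 2^(js - j)) / 4 \<le> \<epsilon>^2 * (G / 2^j) / 4"
        using e2 by (intro divide_right_mono mult_left_mono) auto
      moreover have "\<epsilon>^2 * (T * 2^(js - j)) / 4 = ln (8/\<delta>) * 2^(js - j)"
        using T_def e2 by (simp add: field_simps)
      ultimately show ?thesis by simp
    qed
    then have "exp (-(\<epsilon>^2 * (G / 2^j) / 4)) \<le> exp (- ln (8/\<delta>)) ^ Suc (js - j)"
      using lnd by (intro exp_pow_bound) auto
    also have "exp (- ln (8/\<delta>)) = \<delta> / 8" using de by (simp add: exp_minus)
    finally show ?thesis using p1 p2 by simp
  qed
  have PBad: "measure_pmf.prob (HH L m) Bad \<le> \<delta>"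
  proof -
    have "measure_pmf.prob (HH L m) Bad \<le> measure_pmf.prob (HH L m) B0 + measure_pmf.prob (HH L m) (\<Union>j\<in>{1..js}. B1 j \<union> B2 j)"
      unfolding Bad_def by (rule measure_Un_le) auto
    also have "measure_pmf.prob (HH L m) (\<Union>j\<in>{1..js}. B1 j \<union> B2 j) \<le> (\<Sum>j\<in>{1..js}. measure_pmf.prob (HH L m) (B1 j \<union> B2 j))"
      by (rule measure_pmf.finite_measure_subadditive_finite) auto
    also have "\<dots> \<le> (\<Sum>j\<in>{1..js}. 2 * (\<delta>/8)^(Suc (js - j)))"
    proof (rule sum_mono)
      fix j assume "j \<in> {1..js}"
      have "measure_pmf.prob (HH L m) (B1 j \<union> B2 j) \<le> measure_pmf.prob (HH L m) (B1 j) + measure_pmf.prob (HH L m) (B2 j)"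
        by (rule measure_Un_le) auto
      then show "measure_pmf.prob (HH L m) (B1 j \<union> B2 j) \<le> 2 * (\<delta>/8)^(Suc (js - j))"
        using PB12[OF \<open>j \<in> {1..js}\<close>] by linarith
    qed
    also have "\<dots> = 2 * (\<Sum>i<js. (\<delta>/8)^(i+1))"
      using sum_reindex_js[of "\<lambda>i. 2 * (\<delta>/8)^(Suc i)" js] by (simp add: sum_distrib_left)
    also have "\<dots> \<le> 2 * ((\<delta>/8) / (1 - \<delta>/8))"
      using geo_bound[of "\<delta>/8" js] de by simp
    also have "\<dots> \<le> \<delta> / 2"
      using de by (simp add: field_simps)
    finally show ?thesis using PB0 by simp
  qed
  have sub: "- (?f -` ?good) \<inter> set_pmf (HH L m) \<subseteq> Bad" using goodh by blast
  have "measure_pmf.prob (HH L m) (- (?f -` ?good)) = measure_pmf.prob (HH L m) (- (?f -` ?good) \<inter> set_pmf (HH L m))"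
    by (simp add: measure_Int_set_pmf)
  also have "\<dots> \<le> measure_pmf.prob (HH L m) Bad"
    using sub by (intro measure_pmf.finite_measure_mono) auto
  finally have "measure_pmf.prob (HH L m) (- (?f -` ?good)) \<le> \<delta>" using PBad by linarith
  moreover have "measure_pmf.prob (HH L m) (- (?f -` ?good)) = 1 - measure_pmf.prob (HH L m) (?f -` ?good)"
    using measure_pmf.prob_compl[of "?f -` ?good" "HH L m"] by (simp add: Compl_eq_Diff_UNIV)
  ultimately show ?thesis unfolding out_dist_eq m_def by simp
qed


lemma bits_ok:
  assumes "n \<le> 2^nb" "b = L + 1 + cap * (nb + L + 1)"
  shows "card (Sig cap L n) \<le> 2^b"
proof -
  have "n * 2^L + 1 \<le> 2^nb * 2^L + 2^nb * 2^L"
    using assms(1) by (intro add_mono mult_right_mono) auto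
  also have "\<dots> = 2^(nb + L + 1)" by (simp add: power_add)
  finally have a: "n * 2^L + 1 \<le> 2^(nb + L + 1)" .
  have b: "(n * 2^L + 1)^cap \<le> 2^(cap * (nb + L + 1))"
    using power_mono[OF a, of cap] by (simp only: mult.commute[of cap] power_mult)
  have c: "L + 1 \<le> 2^L" using pow2_ge[of L] by simp
  have X1: "1 \<le> (2::nat)^(cap * (nb + L + 1))" by simp
  have "card (Sig cap L n) \<le> 1 + (L+1) * (n * 2^L + 1)^cap" by (rule card_Sig)
  also have "\<dots> \<le> 1 + 2^L * 2^(cap * (nb + L + 1))"
    using mult_le_mono[OF c b] by simp
  also have "\<dots> \<le> 2^L * 2^(cap * (nb + L + 1)) + 2^L * 2^(cap * (nb + L + 1))"
  proof -
    have Y: "(1::nat) \<le> 2^L * 2^(cap * (nb + L + 1))" by (simp add: Suc_le_eq)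
    then show ?thesis by linarith
  qed
  also have "\<dots> = 2^b" using assms(2) by (simp add: power_add)
  finally show ?thesis .
qed

theorem mainTheorem7:
  "\<forall>k::nat. \<exists>C>0. \<forall>(n::nat) (\<epsilon>::real) (\<alpha>::real) (\<delta>::real).
     n \<ge> 2 \<and> 0 < \<epsilon> \<and> \<epsilon> < 1/2 \<and> 0 < \<alpha> \<and> \<alpha> < 1 \<and> 0 < \<delta> \<and> \<delta> < 1 \<longrightarrow>
     (\<exists>A b. uses_bits A b \<and>
        real b \<le> C * (1 / (1 - \<alpha>)) * (1 / \<epsilon>^2) * log 2 n * max 1 (log 2 (1 / \<delta>)) \<and>
        (\<forall>xs. valid_stream n xs \<and> length xs \<le> n ^ k \<and> rfds \<alpha> n xs \<longrightarrow>
           measure_pmf.prob (out_dist A xs)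
             {x. \<bar>x - F1 n (freq_g xs)\<bar> \<le> \<epsilon> * F1 n (freq_g xs)} \<ge> 1 - \<delta>))"
proof (intro allI)
  fix k :: nat
  define C :: real where "C = 200 * (real k + 2)"
  have C0: "C > 0" by (simp add: C_def)
  show "\<exists>C>0. \<forall>(n::nat) (\<epsilon>::real) (\<alpha>::real) (\<delta>::real).
     n \<ge> 2 \<and> 0 < \<epsilon> \<and> \<epsilon> < 1/2 \<and> 0 < \<alpha> \<and> \<alpha> < 1 \<and> 0 < \<delta> \<and> \<delta> < 1 \<longrightarrow>
     (\<exists>A b. uses_bits A b \<and>
        real b \<le> C * (1 / (1 - \<alpha>)) * (1 / \<epsilon>^2) * log 2 n * max 1 (log 2 (1 / \<delta>)) \<and>
        (\<forall>xs. valid_stream n xs \<and> length xs \<le> n ^ k \<and> rfds \<alpha> n xs \<longrightarrow>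
           measure_pmf.prob (out_dist A xs)
             {x. \<bar>x - F1 n (freq_g xs)\<bar> \<le> \<epsilon> * F1 n (freq_g xs)} \<ge> 1 - \<delta>))"
  proof (intro exI[of _ C] conjI C0 allI impI)
    fix n :: nat and \<epsilon> \<alpha> \<delta> :: real
    assume H: "n \<ge> 2 \<and> 0 < \<epsilon> \<and> \<epsilon> < 1/2 \<and> 0 < \<alpha> \<and> \<alpha> < 1 \<and> 0 < \<delta> \<and> \<delta> < 1"
    then have n2: "n \<ge> 2" and eps: "0 < \<epsilon>" "\<epsilon> < 1/2" and al: "0 < \<alpha>" "\<alpha> < 1"
      and de: "0 < \<delta>" "\<delta> < 1" by auto
    define lg where "lg = log 2 (real n)"
    have lg1: "1 \<le> lg" using n2 unfolding lg_def by (simp add: le_log_iff)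
    define nb where "nb = nat \<lceil>lg\<rceil>"
    have nb_le: "real nb \<le> lg + 1" unfolding nb_def using lg1 by linarith
    have nb_ge: "lg \<le> real nb" unfolding nb_def by linarith
    have n_le: "n \<le> 2^nb"
    proof -
      have "real n = 2 powr lg" unfolding lg_def using n2 by simp
      also have "\<dots> \<le> 2 powr (real nb)" using nb_ge by (intro powr_mono) auto
      also have "\<dots> = 2^nb" by (simp add: powr_realpow)
      finally show ?thesis by (metis of_nat_le_iff of_nat_numeral of_nat_power)
    qed
    define L where "L = k * nb + 1"
    define T where "T = 4 * ln (8 / \<delta>) / \<epsilon>^2"
    define cap where "cap = nat \<lceil>2 * (2 * T / (1 - \<alpha>) + ln (2 / \<delta>))\<rceil>"
    define b where "b = L + 1 + cap * (nb + L + 1)"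
    have capb: "2 * (2 * T / (1 - \<alpha>) + ln (2 / \<delta>)) \<le> real cap"
      unfolding cap_def by linarith
    show "\<exists>A b. uses_bits A b \<and>
        real b \<le> C * (1 / (1 - \<alpha>)) * (1 / \<epsilon>^2) * log 2 n * max 1 (log 2 (1 / \<delta>)) \<and>
        (\<forall>xs. valid_stream n xs \<and> length xs \<le> n ^ k \<and> rfds \<alpha> n xs \<longrightarrow>
           measure_pmf.prob (out_dist A xs)
             {x. \<bar>x - F1 n (freq_g xs)\<bar> \<le> \<epsilon> * F1 n (freq_g xs)} \<ge> 1 - \<delta>)"
    proof (intro exI[of _ "alg cap L n"] exI[of _ b] conjI allI impI)
      show "uses_bits (alg cap L n) b"
        by (rule alg_bits, rule bits_ok[OF n_le b_def])
    next
      fix xs assume xs: "valid_stream n xs \<and> length xs \<le> n ^ k \<and> rfds \<alpha> n xs"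
      have len: "length xs \<le> 2^(L-1)"
      proof -
        have "n^k \<le> (2^nb)^k" using n_le by (rule power_mono) simp
        then show ?thesis using xs by (simp add: L_def power_mult[symmetric] mult.commute)
      qed
      show "measure_pmf.prob (out_dist (alg cap L n) xs)
             {x. \<bar>x - F1 n (freq_g xs)\<bar> \<le> \<epsilon> * F1 n (freq_g xs)} \<ge> 1 - \<delta>"
        using prob_main[of \<epsilon> \<alpha> \<delta> T cap n xs L] eps al de T_def capb xs len
        by (simp add: L_def)
    next
      show "real b \<le> C * (1 / (1 - \<alpha>)) * (1 / \<epsilon>^2) * log 2 n * max 1 (log 2 (1 / \<delta>))"
      proof -
        define Lam where "Lam = max 1 (log 2 (1 / \<delta>))"
        define D where "D = (1 - \<alpha>) * \<epsilon>^2"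
        have Lam1: "1 \<le> Lam" unfolding Lam_def by simp
        have D0: "0 < D" using al eps unfolding D_def by simp
        have D1: "D \<le> 1"
        proof -
          have "\<epsilon>^2 \<le> 1" using eps by (simp add: power_le_one)
          have "(1 - \<alpha>) * \<epsilon>^2 \<le> 1 * 1"
            by (rule mult_mono) (use al \<open>\<epsilon>^2 \<le> 1\<close> in auto)
          then show ?thesis unfolding D_def by simp
        qed
        have QL: "Lam \<le> Lam / D" using D0 D1 Lam1 by (simp add: le_divide_eq)
        have Q1: "1 \<le> Lam / D" using QL Lam1 by linarith
        have ld: "ln (1/\<delta>) \<le> Lam"
        proof -
          have "0 \<le> log 2 (1/\<delta>)" using de by simp
          have "ln (1/\<delta>) = ln 2 * log 2 (1/\<delta>)" by (simp add: log_def)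
          also have "\<dots> \<le> 1 * log 2 (1/\<delta>)"
            using ln_2_less_1 \<open>0 \<le> log 2 (1/\<delta>)\<close> by (intro mult_right_mono) auto
          also have "\<dots> \<le> Lam" unfolding Lam_def by simp
          finally show ?thesis .
        qed
        have ln8u: "ln (8::real) \<le> 3"
        proof -
          have "ln (8::real) = ln (2^3)" by simp
          also have "\<dots> = 3 * ln 2" by (subst ln_realpow) auto
          finally show ?thesis using ln_2_less_1 by simp
        qed
        have l8: "ln (8 / \<delta>) \<le> 4 * Lam"
        proof -
          have "ln (8 / \<delta>) = ln 8 + ln (1/\<delta>)" using de by (simp add: ln_div)
          then show ?thesis using ln8u ld Lam1 by linarith
        qed
        have l2: "ln (2 / \<delta>) \<le> 2 * Lam"
        proof -
          have "ln (2 / \<delta>) = ln 2 + ln (1/\<delta>)" using de by (simp add: ln_div)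
          then show ?thesis using ln_2_less_1 ld Lam1 by linarith
        qed
        have l2p: "0 \<le> ln (2 / \<delta>)" using de by simp
        have l8p: "0 \<le> ln (8 / \<delta>)" using de by simp
        have T2: "2 * T / (1 - \<alpha>) \<le> 32 * (Lam / D)"
        proof -
          have "2 * T / (1 - \<alpha>) = 8 * ln (8 / \<delta>) / D" unfolding T_def D_def by (simp add: field_simps)
          also have "\<dots> \<le> 8 * (4 * Lam) / D" using l8 D0 by (intro divide_right_mono) auto
          finally show ?thesis by simp
        qed
        have xnn: "0 \<le> 2 * (2 * T / (1 - \<alpha>) + ln (2 / \<delta>))"
          unfolding T_def using al l2p l8p by simp
        have capu: "real cap \<le> 69 * (Lam / D)"
        proof -
          have "real cap \<le> 2 * (2 * T / (1 - \<alpha>) + ln (2 / \<delta>)) + 1"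
            unfolding cap_def using xnn by linarith
          also have "\<dots> \<le> 2 * (32 * (Lam / D) + 2 * (Lam / D)) + (Lam / D)"
          proof -
            have gen: "2*(a + c) + 1 \<le> 2*(32*q + 2*q) + q"
              if "a \<le> 32*q" "c \<le> 2*La" "La \<le> q" "1 \<le> q" for a c q La :: real
              using that by simp
            show ?thesis by (rule gen[OF T2 l2 QL Q1])
          qed
          finally show ?thesis by simp
        qed
        have s1: "real (nb + L + 1) \<le> (2 * real k + 4) * lg"
        proof -
          have "real (nb + L + 1) = (real k + 1) * real nb + 2" unfolding L_def by (simp add: algebra_simps)
          also have "\<dots> \<le> (real k + 1) * (2 * lg) + 2 * lg"
            using nb_le lg1 by (intro add_mono mult_left_mono) auto
          finally show ?thesis by (simp add: algebra_simps)
        qed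
        have s2: "real (L + 1) \<le> (2 * real k + 2) * lg"
        proof -
          have "real (L + 1) = real k * real nb + 2" unfolding L_def by simp
          also have "\<dots> \<le> real k * (2 * lg) + 2 * lg"
            using nb_le lg1 by (intro add_mono mult_left_mono) auto
          finally show ?thesis by (simp add: algebra_simps)
        qed
        have "real b = real (L + 1) + real cap * real (nb + L + 1)" unfolding b_def by (simp add: algebra_simps)
        also have "\<dots> \<le> (2 * real k + 2) * lg + (69 * (Lam / D)) * ((2 * real k + 4) * lg)"
          using s1 s2 capu by (intro add_mono mult_mono) auto
        also have "\<dots> \<le> (2 * real k + 2) * lg * (Lam / D) + (69 * (Lam / D)) * ((2 * real k + 4) * lg)"
        proof -
          have "(2 * real k + 2) * lg * 1 \<le> (2 * real k + 2) * lg * (Lam / D)"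
            using lg1 by (intro mult_left_mono[OF Q1]) auto
          then show ?thesis by simp
        qed
        also have "\<dots> = (Lam / D) * lg * ((2 * real k + 2) + 69 * (2 * real k + 4))"
          by (simp add: algebra_simps)
        also have "\<dots> \<le> (Lam / D) * lg * C"
        proof -
          have nn: "0 \<le> (Lam / D) * lg" by (rule mult_nonneg_nonneg) (use Q1 lg1 in auto)
          show ?thesis unfolding C_def by (rule mult_left_mono) (use nn in auto)
        qed
        also have "\<dots> = C * (1 / (1 - \<alpha>)) * (1 / \<epsilon>^2) * log 2 n * max 1 (log 2 (1 / \<delta>))"
          unfolding Lam_def D_def lg_def by (simp add: field_simps)
        finally show ?thesis .
      qed
    qed
  qed
qed

end
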